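(* Let $(\Lambda W,d)$ be a Sullivan algebra over $\mathbb{Q}$ with $W$ concentrated in odd degrees. Suppose $W$ admits a basis $w_1,\ldots,w_n$ such that for every $1\leq i\leq n$ the element $d w_i$ is a monomial in the $w_j$, i.e. a scalar multiple (possibly zero) of a product $w_{j_1}w_{j_2}\cdots w_{j_m}$ of basis elements. Then $(\Lambda W,d)$ satisfies the Hilali conjecture, i.e. $$\dim H(\Lambda W,d)\geq \dim W.$$
   Context: $\Lambda W$ denotes the free graded-commutative algebra on the graded vector space $W$; a Sullivan algebra is such an algebra with a differential $d$ of degree $+1$ satisfying the usual Sullivan (nilpotence/filtration) condition. *)

theory Defs
  imports Complex_Main "HOL-Library.Function_Algebras"
begin

text \<open>Model of the free graded-commutative algebra on a graded rational vector space W
concentrated in odd degrees, with homogeneous basis w_0,...,w_(n-1).  Since all generators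
are odd, this algebra is the exterior algebra on the w_i.  An element is a function
from finite sets S of indices to coefficients: x S is the coefficient of the basis
monomial e_S = w_(s1) w_(s2) ... w_(sk), s1 < s2 < ... < sk.\<close>

type_synonym ext = "nat set \<Rightarrow> rat"

definition ext_carrier :: "nat \<Rightarrow> ext set" where
  "ext_carrier n = {x. \<forall>S. x S \<noteq> 0 \<longrightarrow> S \<subseteq> {..<n}}"

definition ext_scale :: "rat \<Rightarrow> ext \<Rightarrow> ext" where
  "ext_scale c x = (\<lambda>S. c * x S)"

definition ext_mon :: "nat set \<Rightarrow> ext" where
  "ext_mon J = (\<lambda>S. if S = J then 1 else 0)"

definition ext_gen :: "nat \<Rightarrow> ext" where
  "ext_gen i = ext_mon {i}"

text \<open>Koszul sign: e_T * e_U = ext_sign T U * e_(T Un U) for disjoint T, U.\<close>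
definition ext_sign :: "nat set \<Rightarrow> nat set \<Rightarrow> rat" where
  "ext_sign T U = (-1) ^ card {(i, j). i \<in> T \<and> j \<in> U \<and> j < i}"

definition ext_mult :: "ext \<Rightarrow> ext \<Rightarrow> ext" where
  "ext_mult x y = (\<lambda>S. \<Sum>T\<in>Pow S. x T * y (S - T) * ext_sign T (S - T))"

definition mon_degree :: "(nat \<Rightarrow> nat) \<Rightarrow> nat set \<Rightarrow> nat" where
  "mon_degree deg S = (\<Sum>i\<in>S. deg i)"

definition homogeneous :: "(nat \<Rightarrow> nat) \<Rightarrow> nat \<Rightarrow> ext \<Rightarrow> bool" where
  "homogeneous deg p x \<longleftrightarrow> (\<forall>S. x S \<noteq> 0 \<longrightarrow> mon_degree deg S = p)"

definition gen_space :: "nat \<Rightarrow> ext set" where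
  "gen_space n = {x. \<forall>S. x S \<noteq> 0 \<longrightarrow> (\<exists>i<n. S = {i})}"

definition is_subspace :: "ext set \<Rightarrow> bool" where
  "is_subspace V \<longleftrightarrow> 0 \<in> V \<and> (\<forall>x\<in>V. \<forall>y\<in>V. x + y \<in> V) \<and> (\<forall>c. \<forall>x\<in>V. ext_scale c x \<in> V)"

inductive_set subalg :: "ext set \<Rightarrow> ext set" for V where
  sub_one: "ext_mon {} \<in> subalg V"
| sub_gen: "v \<in> V \<Longrightarrow> v \<in> subalg V"
| sub_add: "x \<in> subalg V \<Longrightarrow> y \<in> subalg V \<Longrightarrow> x + y \<in> subalg V"
| sub_scale: "x \<in> subalg V \<Longrightarrow> ext_scale c x \<in> subalg V"
| sub_mult: "x \<in> subalg V \<Longrightarrow> y \<in> subalg V \<Longrightarrow> ext_mult x y \<in> subalg V"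

definition sullivan_algebra :: "nat \<Rightarrow> (nat \<Rightarrow> nat) \<Rightarrow> (ext \<Rightarrow> ext) \<Rightarrow> bool" where
  "sullivan_algebra n deg d \<longleftrightarrow>
     (\<forall>i<n. deg i \<ge> 1)
   \<and> (\<forall>x\<in>ext_carrier n. d x \<in> ext_carrier n)
   \<and> (\<forall>x\<in>ext_carrier n. \<forall>y\<in>ext_carrier n. d (x + y) = d x + d y)
   \<and> (\<forall>c. \<forall>x\<in>ext_carrier n. d (ext_scale c x) = ext_scale c (d x))
   \<and> (\<forall>p x. x \<in> ext_carrier n \<longrightarrow> homogeneous deg p x \<longrightarrow> homogeneous deg (p + 1) (d x))
   \<and> (\<forall>p x y. x \<in> ext_carrier n \<longrightarrow> y \<in> ext_carrier n \<longrightarrow> homogeneous deg p x \<longrightarrow>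
        d (ext_mult x y) = ext_mult (d x) y + ext_scale ((-1) ^ p) (ext_mult x (d y)))
   \<and> (\<forall>x\<in>ext_carrier n. d (d x) = 0)
   \<and> (\<exists>Wf :: nat \<Rightarrow> ext set.
        (\<forall>k. is_subspace (Wf k) \<and> Wf k \<subseteq> gen_space n \<and> Wf k \<subseteq> Wf (Suc k))
      \<and> (\<Union>k. Wf k) = gen_space n
      \<and> (\<forall>x\<in>Wf 0. d x = 0)
      \<and> (\<forall>k. \<forall>x\<in>Wf (Suc k). d x \<in> subalg (Wf k)))"

definition rat_vdim :: "ext set \<Rightarrow> nat" where
  "rat_vdim V = vector_space.dim ext_scale V"

definition cohom_dim :: "nat \<Rightarrow> (ext \<Rightarrow> ext) \<Rightarrow> nat" where
  "cohom_dim n d = rat_vdim {x \<in> ext_carrier n. d x = 0} - rat_vdim (d ` ext_carrier n)"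

end

theory Submission
  imports Defs "HOL-Computational_Algebra.Polynomial"
begin


lemma sum_fun_apply': "(sum f A) x = (\<Sum>a\<in>A. f a x)"
  by (induction A rule: infinite_finite_induct) auto

lemma uminus_fun_apply': "(- g) x = - (g x)" by simp
lemma minus_fun_apply': "(g - h) x = g x - h x" by simp

interpretation ev: vector_space ext_scale
  by unfold_locales (auto simp: ext_scale_def fun_eq_iff algebra_simps)

lemma ext_scale_apply[simp]: "ext_scale c x S = c * x S"
  by (simp add: ext_scale_def)

lemma ext_mon_apply: "ext_mon J S = (if S = J then 1 else 0)"
  by (simp add: ext_mon_def)

definition pairs :: "nat set \<Rightarrow> nat set \<Rightarrow> (nat \<times> nat) set" where
  "pairs T U = {(i, j). i \<in> T \<and> j \<in> U \<and> j < i}"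

lemma ext_sign_pairs: "ext_sign T U = (-1) ^ card (pairs T U)"
  by (simp add: ext_sign_def pairs_def)

lemma finite_pairs: "finite T \<Longrightarrow> finite U \<Longrightarrow> finite (pairs T U)"
  by (rule finite_subset[of _ "T \<times> U"]) (auto simp: pairs_def)

lemma ext_sign_Un1:
  assumes "finite A" "finite B" "finite U" "A \<inter> B = {}"
  shows "ext_sign (A \<union> B) U = ext_sign A U * ext_sign B U"
proof -
  have "pairs (A \<union> B) U = pairs A U \<union> pairs B U" by (auto simp: pairs_def)
  moreover have "pairs A U \<inter> pairs B U = {}" using assms(4) by (auto simp: pairs_def)
  ultimately have "card (pairs (A \<union> B) U) = card (pairs A U) + card (pairs B U)"
    using assms by (simp add: card_Un_disjoint finite_pairs)
  then show ?thesis by (simp add: ext_sign_pairs power_add)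
qed

lemma ext_sign_Un2:
  assumes "finite A" "finite B" "finite T" "A \<inter> B = {}"
  shows "ext_sign T (A \<union> B) = ext_sign T A * ext_sign T B"
proof -
  have "pairs T (A \<union> B) = pairs T A \<union> pairs T B" by (auto simp: pairs_def)
  moreover have "pairs T A \<inter> pairs T B = {}" using assms(4) by (auto simp: pairs_def)
  ultimately have "card (pairs T (A \<union> B)) = card (pairs T A) + card (pairs T B)"
    using assms by (simp add: card_Un_disjoint finite_pairs)
  then show ?thesis by (simp add: ext_sign_pairs power_add)
qed

lemma ext_sign_sq: "ext_sign T U * ext_sign T U = 1"
  by (simp add: ext_sign_def flip: power_mult_distrib)

lemma ext_sign_empty1[simp]: "ext_sign {} U = 1" and ext_sign_empty2[simp]: "ext_sign T {} = 1"
  by (simp_all add: ext_sign_pairs pairs_def)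

lemma ext_sign_single_swap:
  assumes "k \<noteq> l" shows "ext_sign {l} {k} * ext_sign {k} {l} = -1"
proof -
  have a: "pairs {l} {k} = (if k < l then {(l,k)} else {})" "pairs {k} {l} = (if l < k then {(k,l)} else {})"
    by (auto simp: pairs_def)
  have "card (pairs {l} {k}) + card (pairs {k} {l}) = 1"
    using assms unfolding a by auto
  then show ?thesis by (simp add: ext_sign_pairs flip: power_add)
qed

lemma ext_mult_infinite: "infinite S \<Longrightarrow> ext_mult x y S = 0"
  by (simp add: ext_mult_def)

lemma ext_mult_add1: "ext_mult (x + x') y = ext_mult x y + ext_mult x' y"
  by (simp add: ext_mult_def fun_eq_iff algebra_simps sum.distrib)
lemma ext_mult_add2: "ext_mult x (y + y') = ext_mult x y + ext_mult x y'"
  by (simp add: ext_mult_def fun_eq_iff algebra_simps sum.distrib)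
lemma ext_mult_scale1: "ext_mult (ext_scale c x) y = ext_scale c (ext_mult x y)"
  by (simp add: ext_mult_def fun_eq_iff algebra_simps sum_distrib_left)
lemma ext_mult_scale2: "ext_mult x (ext_scale c y) = ext_scale c (ext_mult x y)"
  by (simp add: ext_mult_def fun_eq_iff algebra_simps sum_distrib_left)
lemma ext_mult_zero1[simp]: "ext_mult 0 y = 0"
  by (simp add: ext_mult_def fun_eq_iff)
lemma ext_mult_zero2[simp]: "ext_mult x 0 = 0"
  by (simp add: ext_mult_def fun_eq_iff)

definition fs :: "ext \<Rightarrow> bool" where "fs y \<longleftrightarrow> (\<forall>S. infinite S \<longrightarrow> y S = 0)"

lemma fs_mult: "fs (ext_mult x y)" by (simp add: fs_def ext_mult_infinite)
lemma fs_carrier: "x \<in> ext_carrier n \<Longrightarrow> fs x"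
  by (auto simp: fs_def ext_carrier_def intro: finite_subset)

lemma ext_mult_one1:
  assumes "fs y" shows "ext_mult (ext_mon {}) y = y"
proof
  fix S
  show "ext_mult (ext_mon {}) y S = y S"
  proof (cases "finite S")
    case True
    have "ext_mult (ext_mon {}) y S = (\<Sum>T\<in>Pow S. if T = {} then y S else 0)"
      unfolding ext_mult_def by (rule sum.cong) (auto simp: ext_mon_def)
    also have "\<dots> = y S" using True by (simp add: sum.delta)
    finally show ?thesis .
  qed (use assms in \<open>auto simp: fs_def ext_mult_infinite\<close>)
qed

lemma ext_mult_one2:
  assumes "fs y" shows "ext_mult y (ext_mon {}) = y"
proof
  fix S
  show "ext_mult y (ext_mon {}) S = y S"
  proof (cases "finite S")
    case True
    have "ext_mult y (ext_mon {}) S = (\<Sum>T\<in>Pow S. if T = S then y S else 0)"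
      unfolding ext_mult_def by (rule sum.cong) (auto simp: ext_mon_def)
    also have "\<dots> = y S" using True by (simp add: sum.delta)
    finally show ?thesis .
  qed (use assms in \<open>auto simp: fs_def ext_mult_infinite\<close>)
qed

lemma ext_mult_assoc: "ext_mult (ext_mult x y) z = ext_mult x (ext_mult y z)"
proof
  fix S
  show "ext_mult (ext_mult x y) z S = ext_mult x (ext_mult y z) S"
  proof (cases "finite S")
    case False then show ?thesis by (simp add: ext_mult_infinite)
  next
    case fin: True
    define Q where "Q = (SIGMA T:Pow S. Pow (S - T))"
    define F where "F = (\<lambda>(T, U). x T * y U * z (S - T - U) * ext_sign T U * ext_sign T (S - T - U)
                             * ext_sign U (S - T - U))"
    have "ext_mult (ext_mult x y) z S =
      (\<Sum>R\<in>Pow S. \<Sum>T\<in>Pow R. x T * y (R - T) * ext_sign T (R - T) * z (S - R) * ext_sign R (S - R))"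
      unfolding ext_mult_def by (simp add: sum_distrib_right)
    also have "\<dots> = (\<Sum>(R, T)\<in>(SIGMA R:Pow S. Pow R). x T * y (R - T) * ext_sign T (R - T) * z (S - R) * ext_sign R (S - R))"
      by (rule sum.Sigma) (use fin in \<open>auto intro: finite_subset\<close>)
    also have "\<dots> = sum F Q"
    proof (rule sum.reindex_bij_witness[where i = "\<lambda>(T, U). (T \<union> U, T)" and j = "\<lambda>(R, T). (T, R - T)"])
      fix a assume a: "a \<in> (SIGMA R:Pow S. Pow R)"
      obtain R T where aa: "a = (R, T)" by fastforce
      have fR: "finite R" "finite T" "finite (S - R)" "finite (R - T)"
        using a aa fin by (auto intro: finite_subset)
      have "ext_sign R (S - R) = ext_sign T (S - R) * ext_sign (R - T) (S - R)"
        using ext_sign_Un1[of T "R - T" "S - R"] fR a aa by (auto simp: Un_absorb1 Un_Diff_cancel)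
      moreover have "S - T - (R - T) = S - R" using a aa by auto
      ultimately show "F ((\<lambda>(R, T). (T, R - T)) a) =
          (case a of (R, T) \<Rightarrow> x T * y (R - T) * ext_sign T (R - T) * z (S - R) * ext_sign R (S - R))"
        using aa a by (simp add: F_def Un_absorb1 Un_Diff_cancel2 ac_simps)
    qed (auto simp: Q_def)
    also have "\<dots> = (\<Sum>(T, U)\<in>Q. x T * (y U * z (S - T - U) * ext_sign U (S - T - U)) * ext_sign T (S - T))"
    proof (rule sum.cong[OF refl], clarify)
      fix T U assume "(T, U) \<in> Q"
      then have tu: "T \<subseteq> S" "U \<subseteq> S - T" by (auto simp: Q_def)
      have "ext_sign T (S - T) = ext_sign T U * ext_sign T (S - T - U)"
        using ext_sign_Un2[of U "S - T - U" T] tu fin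
        by (auto intro: finite_subset simp: Un_Diff_cancel Un_absorb1 Diff_partition)
      then show "F (T, U) = x T * (y U * z (S - T - U) * ext_sign U (S - T - U)) * ext_sign T (S - T)"
        by (simp add: F_def ac_simps)
    qed
    also have "\<dots> = (\<Sum>T\<in>Pow S. \<Sum>U\<in>Pow (S - T). x T * (y U * z (S - T - U) * ext_sign U (S - T - U)) * ext_sign T (S - T))"
      unfolding Q_def by (rule sum.Sigma[symmetric]) (use fin in auto)
    also have "\<dots> = ext_mult x (ext_mult y z) S"
      unfolding ext_mult_def by (simp add: sum_distrib_left sum_distrib_right Diff_Un ac_simps set_diff_eq)
    finally show ?thesis .
  qed
qed


lemma gen_space_fs: "v \<in> gen_space n \<Longrightarrow> fs v"
  by (force simp: gen_space_def fs_def)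

lemma gen_space_vals: "v \<in> gen_space n \<Longrightarrow> v S \<noteq> 0 \<Longrightarrow> \<exists>i<n. S = {i}"
  by (auto simp: gen_space_def)

lemma mult_gen:
  assumes v: "v \<in> gen_space n" and fin: "finite S"
  shows "ext_mult v z S = (\<Sum>k\<in>S. v {k} * z (S - {k}) * ext_sign {k} (S - {k}))"
proof -
  have "ext_mult v z S = (\<Sum>T\<in>(\<lambda>k. {k}) ` S. v T * z (S - T) * ext_sign T (S - T))"
    unfolding ext_mult_def
    by (rule sum.mono_neutral_right) (use fin v in \<open>auto simp: gen_space_def\<close>)
  also have "\<dots> = (\<Sum>k\<in>S. v {k} * z (S - {k}) * ext_sign {k} (S - {k}))"
    by (subst sum.reindex) (auto simp: inj_on_def)
  finally show ?thesis .
qed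

definition iota :: "nat \<Rightarrow> (nat \<Rightarrow> rat) \<Rightarrow> ext \<Rightarrow> ext" where
  "iota n \<phi> x = (\<lambda>S. \<Sum>l\<in>{..<n} - S. \<phi> l * ext_sign {l} S * x (insert l S))"

definition lf :: "nat \<Rightarrow> (nat \<Rightarrow> rat) \<Rightarrow> ext \<Rightarrow> rat" where
  "lf n \<phi> v = (\<Sum>l<n. \<phi> l * v {l})"

lemma iota_add: "iota n \<phi> (x + y) = iota n \<phi> x + iota n \<phi> y"
  by (simp add: iota_def fun_eq_iff algebra_simps sum.distrib)
lemma iota_scale: "iota n \<phi> (ext_scale c x) = ext_scale c (iota n \<phi> x)"
  by (simp add: iota_def fun_eq_iff algebra_simps sum_distrib_left)
lemma iota_one: "iota n \<phi> (ext_mon {}) = 0"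
  by (simp add: iota_def fun_eq_iff ext_mon_def)

lemma sign_l_S:
  assumes "finite S" "k \<in> S"
  shows "ext_sign {l} S = ext_sign {l} (S - {k}) * ext_sign {l} {k}"
  using ext_sign_Un2[of "S - {k}" "{k}" "{l}"] assms by (auto simp: insert_absorb)

lemma iota_left:
  assumes v: "v \<in> gen_space n" and fz: "fs z"
  shows "iota n \<phi> (ext_mult v z) = ext_scale (lf n \<phi> v) z - ext_mult v (iota n \<phi> z)"
proof
  fix S
  let ?L = "{..<n}"
  have vout: "v {k} = 0" if "k \<notin> ?L" for k using v that by (auto simp: gen_space_def)
  show "iota n \<phi> (ext_mult v z) S = (ext_scale (lf n \<phi> v) z - ext_mult v (iota n \<phi> z)) S"
  proof (cases "finite S")
    case False
    then show ?thesis using fz by (simp add: iota_def ext_mult_infinite fs_def)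
  next
    case fin: True
    define A where "A = (\<lambda>l k. \<phi> l * ext_sign {l} S * (v {k} * z (insert l (S - {k})) * ext_sign {k} (insert l (S - {k}))))"
    define B where "B = (\<lambda>k l. v {k} * (\<phi> l * ext_sign {l} (S - {k}) * z (insert l (S - {k}))) * ext_sign {k} (S - {k}))"
    have AB: "A l k = - B k l" if "l \<notin> S" "k \<in> S" for l k
    proof -
      have kl: "k \<noteq> l" using that by auto
      have u: "(S - {k}) \<union> {l} = insert l (S - {k})" by auto
      have e1: "ext_sign {k} (insert l (S - {k})) = ext_sign {k} (S - {k}) * ext_sign {k} {l}"
        using ext_sign_Un2[of "S - {k}" "{l}" "{k}"] fin that unfolding u by auto
      have e2: "ext_sign {l} S = ext_sign {l} (S - {k}) * ext_sign {l} {k}"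
        by (rule sign_l_S) (use fin that in auto)
      have "A l k = (\<phi> l * ext_sign {l} (S - {k}) * z (insert l (S - {k})) * v {k} * ext_sign {k} (S - {k})) * (ext_sign {l} {k} * ext_sign {k} {l})"
        unfolding A_def e1 e2 by (simp add: ac_simps)
      also have "\<dots> = - B k l" unfolding ext_sign_single_swap[OF kl] B_def by (simp add: ac_simps)
      finally show ?thesis .
    qed
    have "iota n \<phi> (ext_mult v z) S = (\<Sum>l\<in>?L - S. \<phi> l * ext_sign {l} S *
            (\<Sum>k\<in>insert l S. v {k} * z (insert l S - {k}) * ext_sign {k} (insert l S - {k})))"
      unfolding iota_def using fin by (simp add: mult_gen[OF v])
    also have "\<dots> = (\<Sum>l\<in>?L - S. \<phi> l * ext_sign {l} S *
            (v {l} * z S * ext_sign {l} S + (\<Sum>k\<in>S. v {k} * z (insert l (S - {k})) * ext_sign {k} (insert l (S - {k})))))"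
    proof (rule sum.cong[OF refl])
      fix l assume l: "l \<in> ?L - S"
      have "insert l S - {l} = S" using l by auto
      moreover have "insert l S - {k} = insert l (S - {k})" if "k \<in> S" for k using l that by auto
      ultimately show "\<phi> l * ext_sign {l} S * (\<Sum>k\<in>insert l S. v {k} * z (insert l S - {k}) * ext_sign {k} (insert l S - {k})) =
         \<phi> l * ext_sign {l} S * (v {l} * z S * ext_sign {l} S + (\<Sum>k\<in>S. v {k} * z (insert l (S - {k})) * ext_sign {k} (insert l (S - {k}))))"
        using l fin by (simp add: sum.insert)
    qed
    also have "\<dots> = (\<Sum>l\<in>?L - S. \<phi> l * v {l} * z S) + (\<Sum>l\<in>?L - S. \<Sum>k\<in>S. A l k)"
      unfolding A_def by (simp add: sum.distrib sum_distrib_left algebra_simps ext_sign_sq[unfolded mult.assoc])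
    also have "(\<Sum>l\<in>?L - S. \<Sum>k\<in>S. A l k) = - (\<Sum>k\<in>S. \<Sum>l\<in>?L - S. B k l)"
      by (subst sum.swap) (simp add: AB sum_negf)
    finally have lhs: "iota n \<phi> (ext_mult v z) S = (\<Sum>l\<in>?L - S. \<phi> l * v {l} * z S) - (\<Sum>k\<in>S. \<Sum>l\<in>?L - S. B k l)"
      by simp
    have "ext_mult v (iota n \<phi> z) S = (\<Sum>k\<in>S. v {k} * (\<Sum>l\<in>?L - (S - {k}). \<phi> l * ext_sign {l} (S - {k}) * z (insert l (S - {k}))) * ext_sign {k} (S - {k}))"
      by (simp add: mult_gen[OF v fin] iota_def)
    also have "\<dots> = (\<Sum>k\<in>S. \<phi> k * v {k} * z S + (\<Sum>l\<in>?L - S. B k l))"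
    proof (rule sum.cong[OF refl])
      fix k assume k: "k \<in> S"
      show "v {k} * (\<Sum>l\<in>?L - (S - {k}). \<phi> l * ext_sign {l} (S - {k}) * z (insert l (S - {k}))) * ext_sign {k} (S - {k}) =
        \<phi> k * v {k} * z S + (\<Sum>l\<in>?L - S. B k l)"
      proof (cases "k \<in> ?L")
        case True
        have e: "?L - (S - {k}) = insert k (?L - S)" using True k by auto
        have "insert k (S - {k}) = S" using k by auto
        then show ?thesis unfolding e B_def using k
          by (simp add: sum.insert algebra_simps sum_distrib_left sum_distrib_right ext_sign_sq[unfolded mult.assoc])
      next
        case False
        then show ?thesis by (simp add: vout B_def)
      qed
    qed
    also have "\<dots> = (\<Sum>l\<in>?L \<inter> S. \<phi> l * v {l} * z S) + (\<Sum>k\<in>S. \<Sum>l\<in>?L - S. B k l)"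
    proof -
      have "(\<Sum>k\<in>S. \<phi> k * v {k} * z S) = (\<Sum>l\<in>?L \<inter> S. \<phi> l * v {l} * z S)"
        by (rule sum.mono_neutral_right) (use fin vout in auto)
      then show ?thesis by (simp add: sum.distrib)
    qed
    finally have rhs: "ext_mult v (iota n \<phi> z) S = (\<Sum>l\<in>?L \<inter> S. \<phi> l * v {l} * z S) + (\<Sum>k\<in>S. \<Sum>l\<in>?L - S. B k l)" .
    have "lf n \<phi> v * z S = (\<Sum>l\<in>?L - S. \<phi> l * v {l} * z S) + (\<Sum>l\<in>?L \<inter> S. \<phi> l * v {l} * z S)"
    proof -
      have "lf n \<phi> v * z S = (\<Sum>l\<in>?L. \<phi> l * v {l} * z S)" by (simp add: lf_def sum_distrib_right)
      also have "\<dots> = (\<Sum>l\<in>(?L - S) \<union> (?L \<inter> S). \<phi> l * v {l} * z S)" by (rule sum.cong) auto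
      also have "\<dots> = (\<Sum>l\<in>?L - S. \<phi> l * v {l} * z S) + (\<Sum>l\<in>?L \<inter> S. \<phi> l * v {l} * z S)"
        by (rule sum.union_disjoint) auto
      finally show ?thesis .
    qed
    then show ?thesis using lhs rhs by simp
  qed
qed

inductive_set lgen :: "ext set \<Rightarrow> ext set" for V where
  lg_one: "ext_mon {} \<in> lgen V"
| lg_add: "x \<in> lgen V \<Longrightarrow> y \<in> lgen V \<Longrightarrow> x + y \<in> lgen V"
| lg_scale: "x \<in> lgen V \<Longrightarrow> ext_scale c x \<in> lgen V"
| lg_mult: "v \<in> V \<Longrightarrow> x \<in> lgen V \<Longrightarrow> ext_mult v x \<in> lgen V"

lemma fs_mon: "finite J \<Longrightarrow> fs (ext_mon J)" by (auto simp: fs_def ext_mon_def)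

lemma lgen_fs: "x \<in> lgen V \<Longrightarrow> fs x"
  by (induction rule: lgen.induct) (auto simp: fs_def fs_mon ext_mult_infinite ext_mon_def)

lemma lgen_mult: "x \<in> lgen V \<Longrightarrow> y \<in> lgen V \<Longrightarrow> ext_mult x y \<in> lgen V"
proof (induction rule: lgen.induct)
  case lg_one then show ?case by (simp add: ext_mult_one1 lgen_fs)
next
  case (lg_add x x') then show ?case by (metis ext_mult_add1 lgen.lg_add)
next
  case (lg_scale x c) then show ?case by (metis ext_mult_scale1 lgen.lg_scale)
next
  case (lg_mult v x) then show ?case by (simp add: ext_mult_assoc lgen.lg_mult)
qed

lemma subalg_lgen:
  assumes "V \<subseteq> gen_space n" shows "x \<in> subalg V \<Longrightarrow> x \<in> lgen V"
proof (induction rule: subalg.induct)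
  case (sub_gen v)
  then have "ext_mult v (ext_mon {}) \<in> lgen V" by (intro lgen.lg_mult lgen.lg_one)
  moreover have "fs v" using sub_gen assms gen_space_fs by blast
  ultimately show ?case by (simp add: ext_mult_one2)
next
  case (sub_add x y) then show ?case by (blast intro: lgen.lg_add)
next
  case (sub_scale x c) then show ?case by (blast intro: lgen.lg_scale)
qed (auto intro: lgen.intros lgen_mult)

lemma iota_lgen:
  assumes "V \<subseteq> gen_space n" "\<forall>v\<in>V. lf n \<phi> v = 0"
  shows "x \<in> lgen V \<Longrightarrow> iota n \<phi> x = 0"
proof (induction rule: lgen.induct)
  case (lg_mult v x)
  have "iota n \<phi> (ext_mult v x) = ext_scale (lf n \<phi> v) x - ext_mult v (iota n \<phi> x)"
    using assms lg_mult lgen_fs[OF lg_mult(2)] by (intro iota_left) auto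
  also have "\<dots> = 0"
  proof -
    have "lf n \<phi> v = 0" using lg_mult.hyps(1) assms(2) by blast
    moreover have "ext_scale 0 x = 0" by (simp add: ext_scale_def zero_fun_def)
    ultimately show ?thesis using lg_mult.IH by (simp del: ext_mult_zero2 add: ext_mult_zero2[unfolded zero_fun_def] zero_fun_def)
  qed
  finally show ?case .
next
  case (lg_add x y) then show ?case using iota_add[of n \<phi> x y] by (metis add.right_neutral)
next
  case (lg_scale x c) then show ?case using iota_scale[of n \<phi> c x] by (simp add: ext_scale_def zero_fun_def)
qed (simp_all add: iota_one)


interpretation evr: vector_space_pair ext_scale "(*) :: rat \<Rightarrow> rat \<Rightarrow> rat"
  by unfold_locales (auto simp: algebra_simps)

lemma is_subspace_ev: "is_subspace V \<Longrightarrow> ev.subspace V"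
  by (simp add: is_subspace_def ev.subspace_def)

lemma gen_decomp:
  assumes "v \<in> gen_space n"
  shows "v = (\<Sum>l<n. ext_scale (v {l}) (ext_gen l))"
proof
  fix S
  have "(\<Sum>l<n. ext_scale (v {l}) (ext_gen l)) S = (\<Sum>l<n. if S = {l} then v {l} else 0)"
    by (simp add: sum_fun_apply' ext_gen_def ext_mon_def) (rule sum.cong, auto)
  also have "\<dots> = v S"
  proof (cases "\<exists>i<n. S = {i}")
    case True
    then obtain i where i: "i < n" "S = {i}" by blast
    then have "(\<Sum>l<n. if S = {l} then v {l} else 0) = (\<Sum>l<n. if l = i then v {i} else 0)"
      by (intro sum.cong) auto
    then show ?thesis using i by simp
  next
    case False
    then have "v S = 0" using assms by (auto simp: gen_space_def)
    moreover have "(\<Sum>l<n. if S = {l} then v {l} else 0) = 0"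
      using False by (intro sum.neutral) auto
    ultimately show ?thesis by simp
  qed
  finally show "v S = (\<Sum>l<n. ext_scale (v {l}) (ext_gen l)) S" by simp
qed

lemma ext_sign_nz: "ext_sign T U \<noteq> 0" by (simp add: ext_sign_def)

lemma mon_in_subalg:
  assumes V: "V \<subseteq> gen_space n" "is_subspace V" and J: "J \<subseteq> {..<n}" "j \<in> J"
    and mem: "ext_mon J \<in> subalg V"
  shows "ext_gen j \<in> V"
proof (rule ccontr)
  assume nj: "ext_gen j \<notin> V"
  have sV: "ev.subspace V" using V(2) by (rule is_subspace_ev)
  obtain B where B: "B \<subseteq> V" "ev.independent B" "V \<subseteq> ev.span B" "card B = ev.dim V"
    by (rule ev.basis_exists[of V])
  have "ev.span B \<subseteq> V" using B(1) sV by (rule ev.span_minimal)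
  then have njB: "ext_gen j \<notin> ev.span B" using nj by blast
  define C where "C = insert (ext_gen j) B"
  have iC: "ev.independent C" unfolding C_def using njB B(2) by (rule ev.independent_insertI)
  define g where "g = evr.construct C (\<lambda>b. if b = ext_gen j then 1 else 0)"
  have lin: "Vector_Spaces.linear ext_scale (*) g" unfolding g_def by (rule evr.linear_construct[OF iC])
  have gB: "g b = 0" if "b \<in> B" for b
  proof -
    have "b \<noteq> ext_gen j" using that B(1) nj by blast
    moreover have "b \<in> C" using that by (simp add: C_def)
    ultimately show ?thesis unfolding g_def by (simp add: evr.construct_basis[OF iC])
  qed
  have gj: "g (ext_gen j) = 1" unfolding g_def using evr.construct_basis[OF iC, of "ext_gen j"] by (simp add: C_def)
  define \<phi> where "\<phi> = (\<lambda>l. g (ext_gen l))"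
  have glf: "g v = lf n \<phi> v" if "v \<in> gen_space n" for v
  proof -
    have "g v = g (\<Sum>l<n. ext_scale (v {l}) (ext_gen l))" using gen_decomp[OF that] by (rule arg_cong)
    also have "\<dots> = (\<Sum>l<n. v {l} * \<phi> l)"
      unfolding evr.linear_sum[OF lin] evr.linear_scale[OF lin] \<phi>_def ..
    finally show ?thesis by (simp add: lf_def mult.commute)
  qed
  have "\<forall>v\<in>V. lf n \<phi> v = 0"
  proof
    fix v assume v: "v \<in> V"
    have "v \<in> ev.span B" using B(3) v by blast
    with gB have "g v = 0" by (rule evr.linear_eq_0_on_span[OF lin])
    then show "lf n \<phi> v = 0" using glf v V(1) by auto
  qed
  then have "iota n \<phi> (ext_mon J) = 0"
    using iota_lgen[OF V(1)] subalg_lgen[OF V(1) mem] by blast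
  then have z: "iota n \<phi> (ext_mon J) (J - {j}) = 0" by simp
  have "iota n \<phi> (ext_mon J) (J - {j}) =
      (\<Sum>l\<in>{..<n} - (J - {j}). if l = j then \<phi> j * ext_sign {j} (J - {j}) else 0)"
    unfolding iota_def
  proof (rule sum.cong[OF refl])
    fix l assume l: "l \<in> {..<n} - (J - {j})"
    have "insert l (J - {j}) = J \<longleftrightarrow> l = j" using l J by blast
    then show "\<phi> l * ext_sign {l} (J - {j}) * ext_mon J (insert l (J - {j})) =
         (if l = j then \<phi> j * ext_sign {j} (J - {j}) else 0)"
      by (auto simp: ext_mon_def)
  qed
  also have "\<dots> = \<phi> j * ext_sign {j} (J - {j})" using J by (simp add: subset_iff)
  finally have "\<phi> j * ext_sign {j} (J - {j}) = 0" using z by simp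
  moreover have "\<phi> j = 1" using gj by (simp add: \<phi>_def)
  ultimately show False using ext_sign_nz by simp
qed


locale hyp =
  fixes n :: nat and deg :: "nat \<Rightarrow> nat" and d :: "ext \<Rightarrow> ext"
    and c :: "nat \<Rightarrow> rat" and J :: "nat \<Rightarrow> nat set"
  assumes sull: "sullivan_algebra n deg d"
    and odd_deg: "\<forall>i<n. odd (deg i)"
    and monomial: "\<forall>i<n. J i \<subseteq> {..<n} \<and> d (ext_gen i) = ext_scale (c i) (ext_mon (J i))"
begin

abbreviation "car \<equiv> ext_carrier n"

lemma deg_pos: "i < n \<Longrightarrow> deg i \<ge> 1" using sull by (simp add: sullivan_algebra_def)
lemma d_car: "x \<in> car \<Longrightarrow> d x \<in> car" using sull by (simp add: sullivan_algebra_def)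
lemma d_add: "x \<in> car \<Longrightarrow> y \<in> car \<Longrightarrow> d (x + y) = d x + d y" using sull by (simp add: sullivan_algebra_def)
lemma d_scale: "x \<in> car \<Longrightarrow> d (ext_scale a x) = ext_scale a (d x)" using sull by (simp add: sullivan_algebra_def)
lemma d_hom: "x \<in> car \<Longrightarrow> homogeneous deg p x \<Longrightarrow> homogeneous deg (p + 1) (d x)"
  using sull by (simp add: sullivan_algebra_def)
lemma d_deriv: "x \<in> car \<Longrightarrow> y \<in> car \<Longrightarrow> homogeneous deg p x \<Longrightarrow>
   d (ext_mult x y) = ext_mult (d x) y + ext_scale ((-1) ^ p) (ext_mult x (d y))"
  using sull by (simp add: sullivan_algebra_def)
lemma dd: "x \<in> car \<Longrightarrow> d (d x) = 0" using sull by (simp add: sullivan_algebra_def)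
lemma J_sub: "i < n \<Longrightarrow> J i \<subseteq> {..<n}" using monomial by simp
lemma d_gen: "i < n \<Longrightarrow> d (ext_gen i) = ext_scale (c i) (ext_mon (J i))" using monomial by simp

lemma filt: obtains Wf :: "nat \<Rightarrow> ext set" where
  "\<And>k. is_subspace (Wf k)" "\<And>k. Wf k \<subseteq> gen_space n" "\<And>k. Wf k \<subseteq> Wf (Suc k)"
  "(\<Union>k. Wf k) = gen_space n" "\<And>x. x \<in> Wf 0 \<Longrightarrow> d x = 0"
  "\<And>k x. x \<in> Wf (Suc k) \<Longrightarrow> d x \<in> subalg (Wf k)"
  using sull unfolding sullivan_algebra_def by metis

lemma mon_car: "S \<subseteq> {..<n} \<Longrightarrow> ext_mon S \<in> car"
  by (auto simp: ext_carrier_def ext_mon_def)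
lemma gen_car: "i < n \<Longrightarrow> ext_gen i \<in> car"
  by (simp add: ext_gen_def mon_car)
lemma gen_in_space: "i < n \<Longrightarrow> ext_gen i \<in> gen_space n"
  by (auto simp: gen_space_def ext_gen_def ext_mon_def)

lemma mon_hom: "homogeneous deg (mon_degree deg S) (ext_mon S)"
  by (simp add: homogeneous_def ext_mon_def)

lemma J_deg: assumes "i < n" "c i \<noteq> 0" shows "mon_degree deg (J i) = deg i + 1"
proof -
  have "homogeneous deg (deg i) (ext_gen i)" using mon_hom[of "{i}"] by (simp add: mon_degree_def ext_gen_def)
  then have "homogeneous deg (deg i + 1) (d (ext_gen i))" using assms by (intro d_hom gen_car)
  then show ?thesis using assms d_gen[of i] by (auto simp: homogeneous_def ext_mon_def)
qed

lemma J_ne: assumes "i < n" "c i \<noteq> 0" shows "J i \<noteq> {}"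
  using J_deg[OF assms] by (auto simp: mon_degree_def)

lemma acyclic: obtains lev :: "nat \<Rightarrow> nat" where
  "\<And>i j. i < n \<Longrightarrow> c i \<noteq> 0 \<Longrightarrow> j \<in> J i \<Longrightarrow> lev j < lev i"
proof -
  obtain Wf where W: "\<And>k. is_subspace (Wf k)" "\<And>k. Wf k \<subseteq> gen_space n" "\<And>k. Wf k \<subseteq> Wf (Suc k)"
    "(\<Union>k. Wf k) = gen_space n" "\<And>x. x \<in> Wf 0 \<Longrightarrow> d x = 0"
    "\<And>k x. x \<in> Wf (Suc k) \<Longrightarrow> d x \<in> subalg (Wf k)" by (rule filt) blast
  have mono: "Wf k \<subseteq> Wf k'" if "k \<le> k'" for k k'
    using that by (induction rule: dec_induct) (use W(3) in blast)+
  define lev where "lev = (\<lambda>i. LEAST k. ext_gen i \<in> Wf k)"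
  have ex: "\<exists>k. ext_gen i \<in> Wf k" if "i < n" for i using W(4) gen_in_space[OF that] by blast
  have levin: "ext_gen i \<in> Wf (lev i)" if "i < n" for i
    unfolding lev_def using ex[OF that] by (rule LeastI_ex)
  have levle: "lev i \<le> k" if "ext_gen i \<in> Wf k" for i k
    unfolding lev_def using that by (rule Least_le)
  show ?thesis
  proof (rule that[of lev])
    fix i j assume i: "i < n" "c i \<noteq> 0" "j \<in> J i"
    have dne: "d (ext_gen i) \<noteq> 0"
    proof
      assume "d (ext_gen i) = 0"
      then have "d (ext_gen i) (J i) = 0" by simp
      then show False using d_gen[OF i(1)] i(2) by (simp add: ext_mon_def)
    qed
    obtain k where k: "lev i = Suc k"
      using levin[OF i(1)] W(5) dne by (cases "lev i") auto
    have "d (ext_gen i) \<in> subalg (Wf k)" using levin[OF i(1)] k W(6) by metis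
    then have "ext_scale (1 / c i) (d (ext_gen i)) \<in> subalg (Wf k)" by (rule sub_scale)
    moreover have "ext_scale (1 / c i) (d (ext_gen i)) = ext_mon (J i)"
      using i d_gen[OF i(1)] by (simp add: ext_scale_def)
    ultimately have "ext_mon (J i) \<in> subalg (Wf k)" by simp
    then have "ext_gen j \<in> Wf k"
      using mon_in_subalg[OF W(2) W(1) J_sub[OF i(1)] i(3)] by blast
    then show "lev j < lev i" using levle k by fastforce
  qed
qed

primrec nu_it :: "nat \<Rightarrow> nat \<Rightarrow> nat" where
  "nu_it 0 i = 1"
| "nu_it (Suc t) i = (if c i \<noteq> 0 then (\<Sum>j\<in>J i. nu_it t j) else 1)"

lemma nu_it_pos: "i < n \<Longrightarrow> nu_it t i \<ge> 1"
proof (induction t arbitrary: i)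
  case (Suc t)
  show ?case
  proof (cases "c i \<noteq> 0")
    case True
    obtain j where j: "j \<in> J i" using J_ne[OF Suc.prems True] by blast
    have fin: "finite (J i)" using J_sub[OF Suc.prems] finite_subset by blast
    have "nu_it t j \<le> (\<Sum>j\<in>J i. nu_it t j)" using fin j by (intro member_le_sum) auto
    moreover have "nu_it t j \<ge> 1" using Suc.IH j J_sub[OF Suc.prems] by auto
    ultimately show ?thesis using True by simp
  qed simp
qed simp

lemma weights: obtains \<nu> :: "nat \<Rightarrow> nat" where
  "\<And>i. i < n \<Longrightarrow> \<nu> i \<ge> 1"
  "\<And>i. i < n \<Longrightarrow> c i \<noteq> 0 \<Longrightarrow> \<nu> i = (\<Sum>j\<in>J i. \<nu> j)"
proof -
  obtain lev :: "nat \<Rightarrow> nat" where lev: "\<And>i j. i < n \<Longrightarrow> c i \<noteq> 0 \<Longrightarrow> j \<in> J i \<Longrightarrow> lev j < lev i"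
    by (fact acyclic)
  have stab: "\<forall>i<n. lev i < t \<longrightarrow> (\<forall>s. nu_it (t + s) i = nu_it t i)" for t
  proof (induction t)
    case (Suc t)
    show ?case
    proof (intro allI impI)
      fix i s assume i: "i < n" "lev i < Suc t"
      show "nu_it (Suc t + s) i = nu_it (Suc t) i"
      proof (cases "c i \<noteq> 0")
        case True
        have "nu_it (t + s) j = nu_it t j" if "j \<in> J i" for j
          using Suc.IH lev[OF i(1) True that] i(2) J_sub[OF i(1)] that by auto
        then show ?thesis using True by simp
      qed simp
    qed
  qed simp
  define T where "T = Suc (Max (lev ` {..<n}))"
  have lT: "lev i < T" if "i < n" for i
    unfolding T_def using that by (simp add: le_imp_less_Suc)
  show ?thesis
  proof (rule that[of "nu_it T"])
    fix i assume "i < n" then show "nu_it T i \<ge> 1" by (rule nu_it_pos)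
  next
    fix i assume i: "i < n" "c i \<noteq> 0"
    have "nu_it T i = nu_it (T + 1) i" using stab lT[OF i(1)] i(1) by metis
    also have "\<dots> = (\<Sum>j\<in>J i. nu_it T j)" using i by simp
    finally show "nu_it T i = (\<Sum>j\<in>J i. nu_it T j)" .
  qed
qed

end


declare ext_scale_apply[simp del]

lemma mult_gen_mon:
  assumes fin: "finite S'" and lt: "\<forall>s\<in>S'. i < s"
  shows "ext_mult (ext_gen i) (ext_mon S') = ext_mon (insert i S')"
proof
  fix U
  have iS: "i \<notin> S'" using lt by blast
  show "ext_mult (ext_gen i) (ext_mon S') U = ext_mon (insert i S') U"
  proof (cases "finite U")
    case False
    then have "U \<noteq> insert i S'" using fin by auto
    then have "ext_mon (insert i S') U = 0" by (simp add: ext_mon_def)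
    then show ?thesis using ext_mult_infinite[OF False] by simp
  next
    case True
    have g: "ext_gen i \<in> gen_space (Suc i)" by (auto simp: gen_space_def ext_gen_def ext_mon_def)
    have "ext_mult (ext_gen i) (ext_mon S') U = (\<Sum>k\<in>U. ext_gen i {k} * ext_mon S' (U - {k}) * ext_sign {k} (U - {k}))"
      by (rule mult_gen[OF g True])
    also have "\<dots> = (\<Sum>k\<in>U. if k = i then ext_mon S' (U - {i}) * ext_sign {i} (U - {i}) else 0)"
    proof (rule sum.cong[OF refl])
      fix k show "ext_gen i {k} * ext_mon S' (U - {k}) * ext_sign {k} (U - {k}) =
        (if k = i then ext_mon S' (U - {i}) * ext_sign {i} (U - {i}) else 0)"
        by (cases "k = i") (simp_all add: ext_gen_def ext_mon_def)
    qed
    also have "\<dots> = (if i \<in> U then ext_mon S' (U - {i}) * ext_sign {i} (U - {i}) else 0)"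
      by (rule sum.delta[OF True])
    also have "\<dots> = ext_mon (insert i S') U"
    proof (cases "i \<in> U \<and> U - {i} = S'")
      case True
      have "pairs {i} S' = {}" using lt by (auto simp: pairs_def)
      then have s1: "ext_sign {i} S' = 1" by (simp add: ext_sign_pairs)
      have U: "U = insert i S'" using True by auto
      have "U - {i} = S'" using True by blast
      then show ?thesis using True s1 U by (simp add: ext_mon_def)
    next
      case False
      then have "U \<noteq> insert i S'" using iS by auto
      then show ?thesis using False by (auto simp: ext_mon_def)
    qed
    finally show ?thesis .
  qed
qed

lemma mon_degree_parity:
  assumes "finite T" "\<forall>i\<in>T. odd (deg i)"
  shows "even (mon_degree deg T) \<longleftrightarrow> even (card T)"
  using assms by (induction T rule: finite_induct) (auto simp: mon_degree_def)

locale hypw = hyp +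
  fixes \<nu> :: "nat \<Rightarrow> nat"
  assumes nu_pos: "\<And>i. i < n \<Longrightarrow> \<nu> i \<ge> 1"
    and nu_J: "\<And>i. i < n \<Longrightarrow> c i \<noteq> 0 \<Longrightarrow> \<nu> i = (\<Sum>j\<in>J i. \<nu> j)"
begin

definition wt :: "nat set \<Rightarrow> nat" where "wt S = (\<Sum>i\<in>S. \<nu> i)"

definition nhom :: "nat \<Rightarrow> ext \<Rightarrow> bool" where
  "nhom m x \<longleftrightarrow> (\<forall>S. x S \<noteq> 0 \<longrightarrow> wt S = m)"

lemma nhom_zero: "nhom m 0" by (simp add: nhom_def)
lemma nhom_add: "nhom m x \<Longrightarrow> nhom m y \<Longrightarrow> nhom m (x + y)"
  unfolding nhom_def
proof (intro allI impI)
  fix S assume a: "\<forall>S. x S \<noteq> 0 \<longrightarrow> wt S = m" "\<forall>S. y S \<noteq> 0 \<longrightarrow> wt S = m" and "(x + y) S \<noteq> 0"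
  then have "x S \<noteq> 0 \<or> y S \<noteq> 0" by auto
  then show "wt S = m" using a by blast
qed
lemma nhom_scale: "nhom m x \<Longrightarrow> nhom m (ext_scale a x)" by (auto simp: nhom_def ext_scale_def)
lemma nhom_mon: "nhom (wt S) (ext_mon S)" by (simp add: nhom_def ext_mon_def)

lemma nhom_mult:
  assumes "nhom m1 x" "nhom m2 y" shows "nhom (m1 + m2) (ext_mult x y)"
  unfolding nhom_def
proof (intro allI impI)
  fix S assume ne: "ext_mult x y S \<noteq> 0"
  then have fin: "finite S" using ext_mult_infinite by blast
  obtain T where T: "T \<in> Pow S" "x T * y (S - T) * ext_sign T (S - T) \<noteq> 0"
    using ne unfolding ext_mult_def by (meson sum.not_neutral_contains_not_neutral)
  then have "wt T = m1" "wt (S - T) = m2" using assms by (auto simp: nhom_def)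
  moreover have "wt S = wt T + wt (S - T)"
    unfolding wt_def using fin T(1) by (simp add: sum.subset_diff)
  ultimately show "wt S = m1 + m2" by simp
qed

lemma d_one: "d (ext_mon {}) = 0"
proof -
  have c1: "ext_mon {} \<in> car" by (rule mon_car) simp
  have h: "homogeneous deg 0 (ext_mon {})" using mon_hom[of "{}"] by (simp add: mon_degree_def)
  have fs: "fs (d (ext_mon {}))" by (rule fs_carrier[OF d_car[OF c1]])
  have "d (ext_mon {}) = d (ext_mult (ext_mon {}) (ext_mon {}))" by (simp add: ext_mult_one1 fs_mon)
  also have "\<dots> = ext_mult (d (ext_mon {})) (ext_mon {}) + ext_scale 1 (ext_mult (ext_mon {}) (d (ext_mon {})))"
    using d_deriv[OF c1 c1 h] by simp
  also have "\<dots> = d (ext_mon {}) + d (ext_mon {})"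
    using fs by (simp add: ext_mult_one1 ext_mult_one2 ext_scale_def)
  finally show ?thesis by (simp add: fun_eq_iff)
qed

lemma d_gen_nhom: assumes "i < n" shows "nhom (\<nu> i) (d (ext_gen i))"
proof (cases "c i = 0")
  case True
  then show ?thesis using d_gen[OF assms] by (simp add: ext_scale_def nhom_def)
next
  case False
  then show ?thesis using d_gen[OF assms] nu_J[OF assms False] nhom_scale[OF nhom_mon] by (simp add: wt_def)
qed

lemma d_mon_nhom: "S \<subseteq> {..<n} \<Longrightarrow> nhom (wt S) (d (ext_mon S))"
proof (induction "card S" arbitrary: S rule: nat_less_induct)
  case 1
  show ?case
  proof (cases "S = {}")
    case True
    then show ?thesis by (simp add: d_one nhom_zero)
  next
    case False
    have fin: "finite S" using 1(2) finite_subset by blast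
    define i where "i = Min S"
    define S' where "S' = S - {i}"
    have iS: "i \<in> S" using fin False by (simp add: i_def)
    have lt: "\<forall>s\<in>S'. i < s"
    proof
      fix s assume s: "s \<in> S'"
      then have "i \<le> s" using fin by (simp add: S'_def i_def)
      moreover have "s \<noteq> i" using s by (simp add: S'_def)
      ultimately show "i < s" by simp
    qed
    have finS': "finite S'" using fin by (simp add: S'_def)
    have S: "S = insert i S'" using iS by (auto simp: S'_def)
    have iS': "i \<notin> S'" by (simp add: S'_def)
    have iL: "i < n" using iS 1(2) by auto
    have S'L: "S' \<subseteq> {..<n}" using 1(2) by (auto simp: S'_def)
    have cS': "card S' < card S" unfolding S'_def using fin iS by (rule card_Diff1_less)
    have IH: "nhom (wt S') (d (ext_mon S'))" using 1(1) cS' S'L by blast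
    have em: "ext_mon S = ext_mult (ext_gen i) (ext_mon S')"
      using mult_gen_mon[OF finS' lt] S by simp
    have hi: "homogeneous deg (deg i) (ext_gen i)" using mon_hom[of "{i}"] by (simp add: mon_degree_def ext_gen_def)
    have dS: "d (ext_mon S) = ext_mult (d (ext_gen i)) (ext_mon S') + ext_scale ((-1) ^ deg i) (ext_mult (ext_gen i) (d (ext_mon S')))"
      unfolding em by (rule d_deriv[OF gen_car[OF iL] mon_car[OF S'L] hi])
    have h1: "nhom (\<nu> i + wt S') (ext_mult (d (ext_gen i)) (ext_mon S'))"
      by (rule nhom_mult[OF d_gen_nhom[OF iL] nhom_mon])
    have h2: "nhom (\<nu> i + wt S') (ext_mult (ext_gen i) (d (ext_mon S')))"
      using nhom_mult[OF nhom_mon[of "{i}"] IH] by (simp add: wt_def ext_gen_def)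
    have "wt S = \<nu> i + wt S'" using S iS' finS' by (simp add: wt_def)
    then show ?thesis unfolding dS using nhom_add[OF h1 nhom_scale[OF h2]] by simp
  qed
qed

lemma d_mon_par:
  assumes "S \<subseteq> {..<n}" "d (ext_mon S) T \<noteq> 0"
  shows "even (card T) \<longleftrightarrow> odd (card S)"
proof -
  have "homogeneous deg (mon_degree deg S + 1) (d (ext_mon S))"
    by (rule d_hom[OF mon_car[OF assms(1)] mon_hom])
  then have md: "mon_degree deg T = mon_degree deg S + 1" using assms(2) by (simp add: homogeneous_def)
  have "d (ext_mon S) \<in> car" by (rule d_car[OF mon_car[OF assms(1)]])
  then have TL: "T \<subseteq> {..<n}" using assms(2) by (simp add: ext_carrier_def)
  have pT: "even (mon_degree deg T) \<longleftrightarrow> even (card T)"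
    using TL odd_deg by (intro mon_degree_parity) (auto intro: finite_subset)
  have pS: "even (mon_degree deg S) \<longleftrightarrow> even (card S)"
    using assms(1) odd_deg by (intro mon_degree_parity) (auto intro: finite_subset)
  show ?thesis using pT pS md by simp
qed

end


interpretation evv: vector_space_pair ext_scale ext_scale
  by unfold_locales

declare ext_scale_apply[simp del]

lemma fin_dim_basis:
  assumes "A \<subseteq> ev.span F" "finite F"
  obtains BA where "BA \<subseteq> A" "ev.independent BA" "A \<subseteq> ev.span BA" "card BA = ev.dim A" "finite BA"
proof -
  obtain BA where BA: "BA \<subseteq> A" "ev.independent BA" "A \<subseteq> ev.span BA" "card BA = ev.dim A"
    by (rule ev.basis_exists[of A])
  have "finite BA" using ev.independent_span_bound[OF assms(2) BA(2)] BA(1) assms(1) by blast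
  then show ?thesis using BA that by blast
qed

lemma dim_Un_le:
  assumes "A \<subseteq> ev.span F" "B \<subseteq> ev.span G" "finite F" "finite G"
  shows "ev.dim (A \<union> B) \<le> ev.dim A + ev.dim B"
proof -
  obtain BA where BA: "BA \<subseteq> A" "ev.independent BA" "A \<subseteq> ev.span BA" "card BA = ev.dim A" "finite BA"
    using fin_dim_basis[OF assms(1,3)] by blast
  obtain BB where BB: "BB \<subseteq> B" "ev.independent BB" "B \<subseteq> ev.span BB" "card BB = ev.dim B" "finite BB"
    using fin_dim_basis[OF assms(2,4)] by blast
  have "A \<union> B \<subseteq> ev.span (BA \<union> BB)"
    using BA(3) BB(3) ev.span_mono[of BA "BA \<union> BB"] ev.span_mono[of BB "BA \<union> BB"] by blast
  then have "ev.dim (A \<union> B) \<le> card (BA \<union> BB)" using BA(5) BB(5) by (intro ev.dim_le_card) auto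
  also have "\<dots> \<le> card BA + card BB" by (rule card_Un_le)
  finally show ?thesis using BA(4) BB(4) by simp
qed

lemma dim_UN_le:
  assumes "finite I" "\<And>i. i \<in> I \<Longrightarrow> A i \<subseteq> ev.span F" "finite F"
  shows "ev.dim (\<Union>i\<in>I. A i) \<le> (\<Sum>i\<in>I. ev.dim (A i))"
  using assms(1,2)
proof (induction I rule: finite_induct)
  case empty then show ?case by (metis UN_empty card.empty ev.dim_eq_card_independent ev.independent_empty sum.empty order_refl)
next
  case (insert i I)
  have "ev.dim (\<Union>i\<in>insert i I. A i) = ev.dim (A i \<union> (\<Union>i\<in>I. A i))" by simp
  also have "\<dots> \<le> ev.dim (A i) + ev.dim (\<Union>i\<in>I. A i)"
    by (rule dim_Un_le[OF _ _ assms(3) assms(3)]) (use insert.prems in auto)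
  also have "\<dots> \<le> ev.dim (A i) + (\<Sum>i\<in>I. ev.dim (A i))" using insert by simp
  finally show ?case using insert by simp
qed

context
  fixes D :: "ext \<Rightarrow> ext"
  assumes lin: "Vector_Spaces.linear ext_scale ext_scale D"
begin

lemma D_span_image: "D ` ev.span X = ev.span (D ` X)"
  by (rule evv.linear_span_image[OF lin, symmetric])

lemma ker_subspace: "ev.subspace {x \<in> ev.span X. D x = 0}"
proof -
  have "ev.subspace {x. D x = 0}" by (rule evv.linear_subspace_kernel[OF lin])
  then show ?thesis unfolding ev.subspace_def by (auto intro: ev.span_zero ev.span_add ev.span_scale)
qed

lemma rank_nullity_le:
  assumes fX: "finite X"
  shows "ev.dim (D ` ev.span X) + ev.dim {x \<in> ev.span X. D x = 0} \<le> ev.dim (ev.span X)"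
proof -
  let ?S = "ev.span X" and ?K = "{x \<in> ev.span X. D x = 0}"
  have Ksub: "?K \<subseteq> ev.span X" by blast
  obtain BK where BK: "BK \<subseteq> ?K" "ev.independent BK" "?K \<subseteq> ev.span BK" "card BK = ev.dim ?K" "finite BK"
    by (rule fin_dim_basis[OF Ksub fX])
  obtain C where C: "BK \<subseteq> C" "C \<subseteq> ?S" "ev.independent C" "?S \<subseteq> ev.span C"
  proof (rule ev.maximal_independent_subset_extend[OF _ BK(2)])
    show "BK \<subseteq> ?S" using BK(1) by blast
  qed
  have cC: "card C = ev.dim ?S" using ev.basis_card_eq_dim[OF C(2) C(4) C(3)] .
  have fC: "finite C" using ev.independent_span_bound[OF fX C(3)] C(2) by blast
  have "D ` ?S \<subseteq> ev.span (D ` (C - BK))"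
  proof
    fix y assume "y \<in> D ` ?S"
    then obtain s where s: "s \<in> ?S" "y = D s" by blast
    have "?S \<subseteq> ev.span C" by (rule C(4))
    then have "y \<in> D ` ev.span C" using s by blast
    then have "y \<in> ev.span (D ` C)" by (simp add: D_span_image)
    moreover have "D ` C \<subseteq> insert 0 (D ` (C - BK))" using BK(1) by auto
    ultimately show "y \<in> ev.span (D ` (C - BK))"
      using ev.span_mono[of "D ` C" "insert 0 (D ` (C - BK))"] by auto
  qed
  then have "ev.dim (D ` ?S) \<le> card (D ` (C - BK))"
    by (rule ev.dim_le_card) (use fC in simp)
  also have "\<dots> \<le> card (C - BK)" using fC by (intro card_image_le) simp
  also have "\<dots> = card C - card BK" using fC BK(5) C(1) by (simp add: card_Diff_subset)
  finally have "ev.dim (D ` ?S) \<le> card C - card BK" .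
  moreover have "card BK \<le> card C" using fC C(1) by (rule card_mono)
  ultimately show ?thesis using cC BK(4) by linarith
qed

lemma rank_nullity_ge:
  assumes fX: "finite X"
  shows "ev.dim (ev.span X) \<le> ev.dim (D ` ev.span X) + ev.dim {x \<in> ev.span X. D x = 0}"
proof -
  let ?S = "ev.span X" and ?K = "{x \<in> ev.span X. D x = 0}"
  have Ksub: "?K \<subseteq> ev.span X" by blast
  obtain BK where BK: "BK \<subseteq> ?K" "ev.independent BK" "?K \<subseteq> ev.span BK" "card BK = ev.dim ?K" "finite BK"
    by (rule fin_dim_basis[OF Ksub fX])
  have DS: "D ` ?S = ev.span (D ` X)" by (rule D_span_image)
  have DSsub: "D ` ?S \<subseteq> ev.span (D ` X)" using DS by simp
  obtain Y where Y: "Y \<subseteq> D ` ?S" "ev.independent Y" "D ` ?S \<subseteq> ev.span Y" "card Y = ev.dim (D ` ?S)" "finite Y"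
    by (rule fin_dim_basis[OF DSsub]) (use fX in simp)
  have "\<forall>y\<in>Y. \<exists>s. s \<in> ?S \<and> D s = y" using Y(1) by blast
  then obtain g where g: "\<And>y. y \<in> Y \<Longrightarrow> g y \<in> ?S \<and> D (g y) = y" by metis
  have "?S \<subseteq> ev.span (g ` Y \<union> BK)"
  proof
    fix s assume s: "s \<in> ?S"
    have "D s \<in> ev.span Y" using Y(3) s by blast
    then obtain u where u: "D s = (\<Sum>y\<in>Y. ext_scale (u y) y)"
      using ev.span_finite[OF Y(5)] by auto
    define t where "t = (\<Sum>y\<in>Y. ext_scale (u y) (g y))"
    have tS: "t \<in> ?S" unfolding t_def using g by (intro ev.span_sum ev.span_scale) auto
    have tG: "t \<in> ev.span (g ` Y \<union> BK)" unfolding t_def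
      by (intro ev.span_sum ev.span_scale ev.span_base) auto
    have "D t = D s" unfolding t_def u
      by (simp add: evv.linear_sum[OF lin] evv.linear_scale[OF lin] g)
    then have "s - t \<in> ?K" using s tS by (simp add: ev.span_diff evv.linear_diff[OF lin])
    then have "s - t \<in> ev.span BK" using BK(3) by blast
    then have "s - t \<in> ev.span (g ` Y \<union> BK)" using ev.span_mono[of BK "g ` Y \<union> BK"] by blast
    then have "(s - t) + t \<in> ev.span (g ` Y \<union> BK)" using tG by (rule ev.span_add)
    then show "s \<in> ev.span (g ` Y \<union> BK)" by simp
  qed
  then have "ev.dim ?S \<le> card (g ` Y \<union> BK)" by (rule ev.dim_le_card) (use Y(5) BK(5) in simp)
  also have "\<dots> \<le> card (g ` Y) + card BK" by (rule card_Un_le)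
  also have "\<dots> \<le> card Y + card BK" using card_image_le[OF Y(5), of g] by linarith
  finally show ?thesis using Y(4) BK(4) by simp
qed

end


definition nzc :: "int poly \<Rightarrow> nat set" where "nzc p = {k. coeff p k \<noteq> 0}"

lemma finite_nzc: "finite (nzc p)"
  by (rule finite_subset[of _ "{..degree p}"]) (auto simp: nzc_def le_degree)

lemma strip_monom:
  fixes p :: "int poly"
  assumes "p \<noteq> 0"
  shows "\<exists>q k. p = monom 1 k * q \<and> coeff q 0 \<noteq> 0"
  using assms
proof (induction p)
  case 0 then show ?case by simp
next
  case (pCons a p)
  show ?case
  proof (cases "a = 0")
    case False
    then show ?thesis by (intro exI[of _ "pCons a p"] exI[of _ 0]) (simp add: monom_0 one_pCons)
  next
    case True
    then have "p \<noteq> 0" using pCons.prems by auto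
    then obtain q k where qk: "p = monom 1 k * q" "coeff q 0 \<noteq> 0" using pCons.IH by blast
    have "pCons a p = monom 1 (Suc k) * q"
      using True qk(1) by (simp add: monom_Suc)
    then show ?thesis using qk(2) by blast
  qed
qed

lemma nzc_monom_mult: "nzc (monom 1 k * q) = (\<lambda>j. j + k) ` nzc q"
proof -
  have "nzc (monom 1 k * q) = {j. k \<le> j \<and> coeff q (j - k) \<noteq> 0}"
    by (auto simp: nzc_def coeff_monom_mult)
  also have "\<dots> = (\<lambda>j. j + k) ` nzc q"
    by (auto simp: nzc_def image_iff) (metis le_add_diff_inverse2)
  finally show ?thesis .
qed

lemma order_monom_mult:
  fixes q :: "int poly"
  assumes "q \<noteq> 0"
  shows "order 1 (monom 1 k * q) = order 1 q"
proof -
  have "monom 1 k * q \<noteq> 0" using assms by (simp add: monom_eq_0_iff)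
  moreover have "order 1 (monom (1::int) k) = 0" by (rule order_0I) (simp add: poly_monom)
  ultimately show ?thesis by (simp add: order_mult)
qed

lemma descartes_aux:
  fixes q :: "int poly"
  assumes "q \<noteq> 0"
  shows "order 1 q < card (nzc q)"
  using assms
proof (induction "card (nzc q)" arbitrary: q rule: less_induct)
  case less
  obtain r k where rk: "q = monom 1 k * r" "coeff r 0 \<noteq> 0" using strip_monom[OF less.prems] by blast
  have r0: "r \<noteq> 0" using rk(2) by auto
  have cq: "card (nzc q) = card (nzc r)"
    unfolding rk(1) nzc_monom_mult by (rule card_image) (simp add: inj_on_def)
  have oq: "order 1 q = order 1 r" unfolding rk(1) by (rule order_monom_mult[OF r0])
  have z: "0 \<in> nzc r" using rk(2) by (simp add: nzc_def)
  show ?case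
  proof (cases "degree r = 0")
    case True
    have rc: "[:coeff r 0:] = r" by (rule degree_0_id[OF True])
    have "poly r 1 = coeff r 0" by (subst rc[symmetric]) simp
    then have "poly r 1 \<noteq> 0" using rk(2) by simp
    then have "order 1 r = 0" by (rule order_0I)
    moreover have "card (nzc r) > 0" using z finite_nzc card_gt_0_iff by blast
    ultimately show ?thesis using oq cq by simp
  next
    case False
    define r' where "r' = pderiv r"
    have r'0: "r' \<noteq> 0" using False by (simp add: r'_def pderiv_eq_0_iff)
    have nz: "nzc r = insert 0 (Suc ` nzc r')"
    proof -
      have "nzc r' = {j. coeff r (Suc j) \<noteq> 0}"
        by (simp add: nzc_def r'_def coeff_pderiv del: of_nat_Suc)
      then show ?thesis using z by (auto simp: nzc_def image_iff) (metis not0_implies_Suc)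
    qed
    have cr: "card (nzc r) = Suc (card (nzc r'))"
      unfolding nz by (subst card_insert_disjoint) (auto simp: finite_nzc card_image)
    have IH: "order 1 r' < card (nzc r')" using less.hyps[of r'] cr cq r'0 by simp
    have "order 1 r \<le> Suc (order 1 r')"
    proof (cases "poly r 1 = 0")
      case True
      then show ?thesis using order_pderiv[OF r0 True] by (simp add: r'_def)
    next
      case False
      then have "order 1 r = 0" by (rule order_0I)
      then show ?thesis by simp
    qed
    then show ?thesis using oq cq cr IH by simp
  qed
qed


lemma prod_expand:
  fixes \<nu> :: "nat \<Rightarrow> nat"
  assumes "finite A"
  shows "(\<Prod>i\<in>A. 1 - monom (1::int) (\<nu> i)) = (\<Sum>S\<in>Pow A. monom ((-1) ^ card S) (\<Sum>i\<in>S. \<nu> i))"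
  using assms
proof (induction A rule: finite_induct)
  case empty then show ?case by (simp add: monom_0 one_pCons)
next
  case (insert a A)
  have fP: "finite (Pow A)" using insert by simp
  have inj: "inj_on (insert a) (Pow A)" using insert(2) by (auto simp: inj_on_def)
  have dis: "Pow A \<inter> insert a ` Pow A = {}" using insert(2) by auto
  have "(\<Prod>i\<in>insert a A. 1 - monom (1::int) (\<nu> i)) = (1 - monom 1 (\<nu> a)) * (\<Sum>S\<in>Pow A. monom ((-1) ^ card S) (\<Sum>i\<in>S. \<nu> i))"
    using insert by simp
  also have "\<dots> = (\<Sum>S\<in>Pow A. monom ((-1) ^ card S) (\<Sum>i\<in>S. \<nu> i)) + (\<Sum>S\<in>Pow A. monom ((-1) ^ card (insert a S)) (\<Sum>i\<in>insert a S. \<nu> i))"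
  proof -
    have "(\<Sum>S\<in>Pow A. monom ((-1) ^ card (insert a S)) (\<Sum>i\<in>insert a S. \<nu> i)) =
          (\<Sum>S\<in>Pow A. - (monom (1::int) (\<nu> a) * monom ((-1) ^ card S) (\<Sum>i\<in>S. \<nu> i)))"
    proof (rule sum.cong[OF refl])
      fix S assume S: "S \<in> Pow A"
      then have "a \<notin> S" "finite S" using insert by (auto intro: finite_subset)
      then show "monom ((-1) ^ card (insert a S)) (\<Sum>i\<in>insert a S. \<nu> i) = - (monom (1::int) (\<nu> a) * monom ((-1) ^ card S) (\<Sum>i\<in>S. \<nu> i))"
        by (simp add: mult_monom minus_monom)
    qed
    moreover have "monom 1 (\<nu> a) * (\<Sum>S\<in>Pow A. monom ((-1) ^ card S) (\<Sum>i\<in>S. \<nu> i)) =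
          (\<Sum>S\<in>Pow A. monom (1::int) (\<nu> a) * monom ((-1) ^ card S) (\<Sum>i\<in>S. \<nu> i))"
      by (rule sum_distrib_left)
    ultimately show ?thesis by (simp add: left_diff_distrib sum_negf)
  qed
  also have "\<dots> = (\<Sum>S\<in>Pow A \<union> insert a ` Pow A. monom ((-1) ^ card S) (\<Sum>i\<in>S. \<nu> i))"
    using fP dis inj by (simp add: sum.union_disjoint sum.reindex)
  also have "\<dots> = (\<Sum>S\<in>Pow (insert a A). monom ((-1) ^ card S) (\<Sum>i\<in>S. \<nu> i))"
    by (simp add: Pow_insert)
  finally show ?case .
qed

lemma hilali_count:
  fixes \<nu> :: "nat \<Rightarrow> nat"
  assumes fin: "finite A" and pos: "\<And>i. i \<in> A \<Longrightarrow> \<nu> i \<ge> 1"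
  shows "card A < (\<Sum>m\<le>(\<Sum>i\<in>A. \<nu> i).
     \<bar>int (card {S\<in>Pow A. (\<Sum>i\<in>S. \<nu> i) = m \<and> even (card S) = True}) -
      int (card {S\<in>Pow A. (\<Sum>i\<in>S. \<nu> i) = m \<and> even (card S) = False})\<bar>)"
proof -
  define P where "P = (\<Prod>i\<in>A. 1 - monom (1::int) (\<nu> i))"
  define W where "W = (\<Sum>i\<in>A. \<nu> i)"
  have fac0: "1 - monom (1::int) (\<nu> i) \<noteq> 0" if "i \<in> A" for i
  proof
    assume "1 - monom (1::int) (\<nu> i) = 0"
    then have "coeff (1 - monom (1::int) (\<nu> i)) 0 = 0" by simp
    then show False using pos[OF that] by simp
  qed
  have P0: "P \<noteq> 0" unfolding P_def using fin fac0 by (simp add: prod_zero_iff)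
  have "[:-1, 1:] ^ card A dvd P"
  proof -
    have "(\<Prod>i\<in>A. [:-1, 1:]) dvd P" unfolding P_def
    proof (rule prod_dvd_prod)
      fix i assume "i \<in> A"
      then have "poly (1 - monom (1::int) (\<nu> i)) 1 = 0" by (simp add: poly_monom)
      then show "[:- 1, 1:] dvd 1 - monom (1::int) (\<nu> i)" using poly_eq_0_iff_dvd[of "1 - monom (1::int) (\<nu> i)" 1] by simp
    qed
    then show ?thesis by simp
  qed
  then have oP: "card A \<le> order 1 P" using P0 by (simp add: order_divides)
  have cP: "card A < card (nzc P)" using descartes_aux[OF P0] oP by simp
  have coeffP: "coeff P m = (\<Sum>S\<in>{S\<in>Pow A. (\<Sum>i\<in>S. \<nu> i) = m}. (-1) ^ card S)" for m
  proof -
    have "coeff P m = (\<Sum>S\<in>Pow A. if (\<Sum>i\<in>S. \<nu> i) = m then (-1) ^ card S else 0)"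
      unfolding P_def prod_expand[OF fin] coeff_sum by (simp add: eq_commute)
    also have "\<dots> = (\<Sum>S\<in>{S\<in>Pow A. (\<Sum>i\<in>S. \<nu> i) = m}. (-1) ^ card S)"
      using sum.inter_filter[of "Pow A" "\<lambda>S. (-1::int)^card S" "\<lambda>S. (\<Sum>i\<in>S. \<nu> i) = m"] fin by simp
    finally show ?thesis .
  qed
  define evs where "evs m = {S\<in>Pow A. (\<Sum>i\<in>S. \<nu> i) = m \<and> even (card S) = True}" for m
  define ods where "ods m = {S\<in>Pow A. (\<Sum>i\<in>S. \<nu> i) = m \<and> even (card S) = False}" for m
  have split: "coeff P m = int (card (evs m)) - int (card (ods m))" for m
  proof -
    have u: "{S\<in>Pow A. (\<Sum>i\<in>S. \<nu> i) = m} = evs m \<union> ods m" by (auto simp: evs_def ods_def)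
    have fe: "finite (evs m)" "finite (ods m)" using fin by (auto simp: evs_def ods_def)
    have "coeff P m = (\<Sum>S\<in>evs m. (-1) ^ card S) + (\<Sum>S\<in>ods m. (-1) ^ card S)"
      unfolding coeffP u by (rule sum.union_disjoint) (use fe in \<open>auto simp: evs_def ods_def\<close>)
    also have "(\<Sum>S\<in>evs m. (-1::int) ^ card S) = int (card (evs m))"
      by (simp add: evs_def)
    also have "(\<Sum>S\<in>ods m. (-1::int) ^ card S) = - int (card (ods m))"
      by (simp add: ods_def)
    finally show ?thesis by simp
  qed
  have sub: "nzc P \<subseteq> {..W}"
  proof
    fix m assume "m \<in> nzc P"
    then have "coeff P m \<noteq> 0" by (simp add: nzc_def)
    then obtain S where "S \<in> {S\<in>Pow A. (\<Sum>i\<in>S. \<nu> i) = m}"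
      unfolding coeffP by (meson sum.not_neutral_contains_not_neutral)
    then have "S \<in> Pow A" "(\<Sum>i\<in>S. \<nu> i) = m" by auto
    then show "m \<in> {..W}" unfolding W_def using fin by (auto intro: sum_mono2)
  qed
  have "card (nzc P) = (\<Sum>m\<in>nzc P. 1::int)" by simp
  also have "\<dots> \<le> (\<Sum>m\<in>nzc P. \<bar>coeff P m\<bar>)"
    by (rule sum_mono) (auto simp: nzc_def)
  also have "\<dots> \<le> (\<Sum>m\<le>W. \<bar>coeff P m\<bar>)"
    by (rule sum_mono2) (use sub in auto)
  finally have "int (card (nzc P)) \<le> (\<Sum>m\<le>W. \<bar>coeff P m\<bar>)" .
  then show ?thesis using cP unfolding split W_def evs_def ods_def by linarith
qed


declare ext_scale_apply[simp del]

lemma dim_mono_fin: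
  assumes "A \<subseteq> ev.span B" "B \<subseteq> ev.span F" "finite F"
  shows "ev.dim A \<le> ev.dim B"
proof -
  obtain BB where BB: "BB \<subseteq> B" "ev.independent BB" "B \<subseteq> ev.span BB" "card BB = ev.dim B" "finite BB"
    by (rule fin_dim_basis[OF assms(2,3)])
  have "ev.span B \<subseteq> ev.span BB" using BB(3) by (metis ev.span_minimal ev.subspace_span)
  then have "A \<subseteq> ev.span BB" using assms(1) by blast
  then have "ev.dim A \<le> card BB" by (rule ev.dim_le_card) (rule BB(5))
  then show ?thesis using BB(4) by simp
qed

lemma mon_inj: "inj ext_mon"
proof (rule injI)
  fix S T assume "ext_mon S = ext_mon T"
  then have "ext_mon S S = ext_mon T S" by simp
  then show "S = T" by (simp add: ext_mon_def split: if_splits)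
qed

lemma indep_mon: assumes "finite A" shows "ev.independent (ext_mon ` A)"
  unfolding ev.independent_explicit_finite_subsets
proof (intro allI impI ballI)
  fix S u v assume S: "S \<subseteq> ext_mon ` A" "finite S" and z: "(\<Sum>v\<in>S. ext_scale (u v) v) = 0" and v: "v \<in> S"
  then obtain T0 where T0: "v = ext_mon T0" by blast
  have "(\<Sum>v\<in>S. ext_scale (u v) v) T0 = (\<Sum>w\<in>S. u w * w T0)"
    by (simp add: sum_fun_apply' ext_scale_apply)
  also have "\<dots> = (\<Sum>w\<in>S. if w = v then u v else 0)"
  proof (rule sum.cong[OF refl])
    fix w assume "w \<in> S"
    then obtain T where T: "w = ext_mon T" using S by blast
    have "w = v \<longleftrightarrow> T = T0" using T T0 mon_inj by (auto dest: injD)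
    then show "u w * w T0 = (if w = v then u v else 0)" using T by (auto simp: ext_mon_def)
  qed
  also have "\<dots> = u v" using v S(2) by simp
  finally show "u v = 0" using z by simp
qed

lemma dim_mon: assumes "finite A" shows "ev.dim (ev.span (ext_mon ` A)) = card A"
proof -
  have "ev.dim (ev.span (ext_mon ` A)) = card (ext_mon ` A)"
    using ev.dim_span_eq_card_independent[OF indep_mon[OF assms]] .
  also have "\<dots> = card A" by (rule card_image[OF inj_on_subset[OF mon_inj]]) simp
  finally show ?thesis .
qed

context hypw begin

definition Dm :: "ext \<Rightarrow> ext" where
  "Dm x = (\<Sum>S\<in>Pow {..<n}. ext_scale (x S) (d (ext_mon S)))"

lemma Dm_lin: "Vector_Spaces.linear ext_scale ext_scale Dm"
  unfolding Vector_Spaces.linear_iff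
proof (intro conjI allI)
  show "vector_space ext_scale" by (rule ev.vector_space_axioms)
  show "vector_space ext_scale" by (rule ev.vector_space_axioms)
  fix x y show "Dm (x + y) = Dm x + Dm y"
    by (simp add: Dm_def ev.scale_left_distrib sum.distrib)
next
  fix a x show "Dm (ext_scale a x) = ext_scale a (Dm x)"
    by (simp add: Dm_def ext_scale_apply ev.scale_sum_right)
qed

lemma car_sub: "ev.subspace car"
  unfolding ev.subspace_def
proof (intro conjI ballI allI)
  show "0 \<in> car" by (simp add: ext_carrier_def)
  fix x y assume x: "x \<in> car" and y: "y \<in> car"
  show "x + y \<in> car" unfolding ext_carrier_def
  proof (intro CollectI allI impI)
    fix S assume "(x + y) S \<noteq> 0"
    then have "x S \<noteq> 0 \<or> y S \<noteq> 0" by auto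
    then show "S \<subseteq> {..<n}" using x y by (auto simp: ext_carrier_def)
  qed
next
  fix a x assume x: "x \<in> car"
  show "ext_scale a x \<in> car" using x by (auto simp: ext_carrier_def ext_scale_apply)
qed

lemma car_decomp: assumes "x \<in> car" shows "x = (\<Sum>S\<in>Pow {..<n}. ext_scale (x S) (ext_mon S))"
proof
  fix T
  have "(\<Sum>S\<in>Pow {..<n}. ext_scale (x S) (ext_mon S)) T = (\<Sum>S\<in>Pow {..<n}. x S * ext_mon S T)"
    by (simp add: sum_fun_apply' ext_scale_apply)
  also have "\<dots> = (\<Sum>S\<in>Pow {..<n}. if S = T then x T else 0)"
    by (rule sum.cong) (auto simp: ext_mon_def)
  also have "\<dots> = x T"
  proof (cases "T \<in> Pow {..<n}")
    case True then show ?thesis by simp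
  next
    case False then show ?thesis using assms by (auto simp: ext_carrier_def)
  qed
  finally show "x T = (\<Sum>S\<in>Pow {..<n}. ext_scale (x S) (ext_mon S)) T" by simp
qed

lemma d_zero: "d 0 = 0"
proof -
  have "(0::ext) \<in> car" by (simp add: ext_carrier_def)
  then have "d (0 + 0) = d 0 + d 0" by (rule d_add) (simp add: ext_carrier_def)
  then have "d 0 = d 0 + d 0" by (simp only: add_0_left)
  then show ?thesis by (metis add_cancel_right_right)
qed

lemma d_sum: "finite A \<Longrightarrow> (\<And>a. a \<in> A \<Longrightarrow> f a \<in> car) \<Longrightarrow> d (sum f A) = (\<Sum>a\<in>A. d (f a))"
proof (induction A rule: finite_induct)
  case empty then show ?case by (simp only: sum.empty d_zero)
next
  case (insert a A)
  have "sum f A \<in> car" using insert by (intro ev.subspace_sum[OF car_sub]) auto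
  have e1: "sum f (insert a A) = f a + sum f A" by (rule sum.insert[OF insert(1,2)])
  have e2: "(\<Sum>a\<in>insert a A. d (f a)) = d (f a) + (\<Sum>a\<in>A. d (f a))" by (rule sum.insert[OF insert(1,2)])
  have "d (sum f (insert a A)) = d (f a + sum f A)" by (simp only: e1)
  also have "\<dots> = d (f a) + d (sum f A)" by (rule d_add) (use insert \<open>sum f A \<in> car\<close> in auto)
  also have "d (sum f A) = (\<Sum>a\<in>A. d (f a))" using insert by blast
  then have "d (f a) + d (sum f A) = d (f a) + (\<Sum>a\<in>A. d (f a))" by (rule arg_cong)
  also have "\<dots> = (\<Sum>a\<in>insert a A. d (f a))" by (simp only: e2)
  finally show ?case .
qed

lemma Dm_eq: assumes "x \<in> car" shows "Dm x = d x"
proof -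
  have "d x = d (\<Sum>S\<in>Pow {..<n}. ext_scale (x S) (ext_mon S))" using car_decomp[OF assms] by (rule arg_cong)
  also have "\<dots> = (\<Sum>S\<in>Pow {..<n}. d (ext_scale (x S) (ext_mon S)))"
    by (rule d_sum) (auto intro: ev.subspace_scale[OF car_sub] mon_car)
  also have "\<dots> = Dm x" unfolding Dm_def by (rule sum.cong) (auto simp: d_scale mon_car)
  finally show ?thesis by simp
qed

lemma in_span_mon:
  assumes "x \<in> car" "A \<subseteq> Pow {..<n}" "\<And>T. x T \<noteq> 0 \<Longrightarrow> T \<in> A"
  shows "x \<in> ev.span (ext_mon ` A)"
proof -
  have "x = (\<Sum>S\<in>Pow {..<n}. ext_scale (x S) (ext_mon S))" by (rule car_decomp[OF assms(1)])
  also have "\<dots> = (\<Sum>S\<in>A. ext_scale (x S) (ext_mon S))"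
  proof (rule sum.mono_neutral_right)
    show "\<forall>S\<in>Pow {..<n} - A. ext_scale (x S) (ext_mon S) = 0"
    proof
      fix S assume "S \<in> Pow {..<n} - A"
      then have "x S = 0" using assms(3) by blast
      then show "ext_scale (x S) (ext_mon S) = 0" by (simp add: ev.scale_zero_left)
    qed
  qed (use assms in auto)
  finally have x: "x = (\<Sum>S\<in>A. ext_scale (x S) (ext_mon S))" .
  show ?thesis by (subst x) (intro ev.span_sum ev.span_scale ev.span_base, auto)
qed

definition IX :: "nat \<Rightarrow> bool \<Rightarrow> nat set set" where
  "IX m p = {S\<in>Pow {..<n}. (\<Sum>i\<in>S. \<nu> i) = m \<and> even (card S) = p}"

definition Bl :: "nat \<Rightarrow> bool \<Rightarrow> ext set" where "Bl m p = ext_mon ` IX m p"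

lemma IX_fin: "finite (IX m p)" by (simp add: IX_def)
lemma Bl_fin: "finite (Bl m p)" by (simp add: Bl_def IX_fin)

lemma Dm_block:
  assumes "S \<in> IX m p"
  shows "Dm (ext_mon S) \<in> ev.span (Bl m (\<not> p))" "Dm (Dm (ext_mon S)) = 0"
proof -
  have SL: "S \<subseteq> {..<n}" using assms by (auto simp: IX_def)
  have e: "Dm (ext_mon S) = d (ext_mon S)" by (rule Dm_eq[OF mon_car[OF SL]])
  have dc: "d (ext_mon S) \<in> car" by (rule d_car[OF mon_car[OF SL]])
  show "Dm (ext_mon S) \<in> ev.span (Bl m (\<not> p))" unfolding e Bl_def
  proof (rule in_span_mon[OF dc])
    show "IX m (\<not> p) \<subseteq> Pow {..<n}" by (auto simp: IX_def)
    fix T assume T: "d (ext_mon S) T \<noteq> 0"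
    have "T \<subseteq> {..<n}" using dc T by (auto simp: ext_carrier_def)
    moreover have "wt T = wt S" using d_mon_nhom[OF SL] T by (simp add: nhom_def)
    moreover have "even (card T) \<longleftrightarrow> odd (card S)" by (rule d_mon_par[OF SL T])
    ultimately show "T \<in> IX m (\<not> p)" using assms by (auto simp: IX_def wt_def)
  qed
  show "Dm (Dm (ext_mon S)) = 0" unfolding e using Dm_eq[OF dc] dd[OF mon_car[OF SL]] by simp
qed

lemma block_bound: "ev.dim (Dm ` ev.span (Bl m p \<union> Bl m (\<not> p))) \<le> card (IX m p)"
proof -
  let ?E = "ev.span (Bl m p)"
  let ?K = "{x \<in> ?E. Dm x = 0}"
  have DE: "Dm ` ?E = ev.span (Dm ` Bl m p)" by (rule D_span_image[OF Dm_lin])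
  have sub1: "Dm ` (Bl m p \<union> Bl m (\<not> p)) \<subseteq> Dm ` ?E \<union> ?K"
  proof
    fix y assume "y \<in> Dm ` (Bl m p \<union> Bl m (\<not> p))"
    then obtain S q where S: "S \<in> IX m q" "y = Dm (ext_mon S)" "q = p \<or> q = (\<not> p)" by (auto simp: Bl_def)
    show "y \<in> Dm ` ?E \<union> ?K"
    proof (cases "q = p")
      case True
      then have "ext_mon S \<in> ?E" using S by (auto simp: Bl_def intro: ev.span_base)
      then show ?thesis using S by blast
    next
      case False
      then have "q = (\<not> p)" using S by auto
      then have "y \<in> ?E" "Dm y = 0" using Dm_block[OF S(1)] S(2) by auto
      then show ?thesis by blast
    qed
  qed
  have "Dm ` ev.span (Bl m p \<union> Bl m (\<not> p)) = ev.span (Dm ` (Bl m p \<union> Bl m (\<not> p)))"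
    by (rule D_span_image[OF Dm_lin])
  then have A1: "Dm ` ev.span (Bl m p \<union> Bl m (\<not> p)) \<subseteq> ev.span (Dm ` ?E \<union> ?K)"
    using ev.span_mono[OF sub1] by simp
  have Bsub: "Dm ` ?E \<union> ?K \<subseteq> ev.span (Dm ` Bl m p \<union> Bl m p)"
    using DE ev.span_mono[of "Dm ` Bl m p" "Dm ` Bl m p \<union> Bl m p"] ev.span_mono[of "Bl m p" "Dm ` Bl m p \<union> Bl m p"]
    by blast
  have "ev.dim (Dm ` ev.span (Bl m p \<union> Bl m (\<not> p))) \<le> ev.dim (Dm ` ?E \<union> ?K)"
    by (rule dim_mono_fin[OF A1 Bsub]) (simp add: Bl_fin)
  also have "\<dots> \<le> ev.dim (Dm ` ?E) + ev.dim ?K"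
  proof (rule dim_Un_le)
    show "Dm ` ?E \<subseteq> ev.span (Dm ` Bl m p)" using DE by simp
    show "?K \<subseteq> ev.span (Bl m p)" by blast
  qed (simp_all add: Bl_fin)
  also have "\<dots> \<le> ev.dim ?E" by (rule rank_nullity_le[OF Dm_lin Bl_fin])
  also have "\<dots> = card (IX m p)" unfolding Bl_def by (rule dim_mon[OF IX_fin])
  finally show ?thesis .
qed

end


declare ext_scale_apply[simp del]

context hypw begin

lemma main_ineq: "n \<le> cohom_dim n d"
proof -
  define BB where "BB = ext_mon ` Pow {..<n}"
  define W where "W = (\<Sum>i<n. \<nu> i)"
  define M where "M = {..W}"
  define R where "R m = Dm ` ev.span (Bl m True \<union> Bl m False)" for m
  define a where "a m = card (IX m True)" for m
  define b where "b m = card (IX m False)" for m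
  have fBB: "finite BB" by (simp add: BB_def)
  have car_span: "car = ev.span BB"
  proof
    show "car \<subseteq> ev.span BB"
    proof
      fix x assume x: "x \<in> car"
      show "x \<in> ev.span BB" unfolding BB_def
        by (rule in_span_mon[OF x]) (use x in \<open>auto simp: ext_carrier_def\<close>)
    qed
    have "BB \<subseteq> car" unfolding BB_def using mon_car by blast
    then show "ev.span BB \<subseteq> car" using car_sub by (rule ev.span_minimal)
  qed
  have Ker: "{x \<in> car. d x = 0} = {x \<in> ev.span BB. Dm x = 0}"
  proof -
    have "{x \<in> car. d x = 0} = {x \<in> car. Dm x = 0}"
    proof (rule Collect_cong)
      fix x show "(x \<in> car \<and> d x = 0) = (x \<in> car \<and> Dm x = 0)" using Dm_eq[of x] by auto
    qed
    then show ?thesis by (simp only: car_span)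
  qed
  have Im: "d ` car = Dm ` ev.span BB"
  proof -
    have "d ` car = Dm ` car" using Dm_eq by (simp cong: image_cong)
    then show ?thesis by (simp only: car_span)
  qed
  have dimcar: "ev.dim (ev.span BB) = 2 ^ n" unfolding BB_def using dim_mon[of "Pow {..<n}"] by (simp add: card_Pow)
  have rng: "2 ^ n \<le> ev.dim (Dm ` ev.span BB) + ev.dim {x \<in> ev.span BB. Dm x = 0}"
    using rank_nullity_ge[OF Dm_lin fBB] dimcar by simp
  have wtle: "(\<Sum>i\<in>S. \<nu> i) \<in> M" if "S \<subseteq> {..<n}" for S
    unfolding M_def W_def using that by (auto intro: sum_mono2)
  have IXin: "S \<in> IX (\<Sum>i\<in>S. \<nu> i) (even (card S))" if "S \<subseteq> {..<n}" for S
    using that by (simp add: IX_def)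
  have Rsub: "R m \<subseteq> ev.span (Dm ` BB)" for m
  proof -
    have "R m = ev.span (Dm ` (Bl m True \<union> Bl m False))" unfolding R_def by (rule D_span_image[OF Dm_lin])
    moreover have "Bl m True \<union> Bl m False \<subseteq> BB" by (auto simp: Bl_def BB_def IX_def)
    then have "Dm ` (Bl m True \<union> Bl m False) \<subseteq> Dm ` BB" by (rule image_mono)
    then have "ev.span (Dm ` (Bl m True \<union> Bl m False)) \<subseteq> ev.span (Dm ` BB)" by (rule ev.span_mono)
    ultimately show ?thesis by simp
  qed
  have "Dm ` ev.span BB = ev.span (Dm ` BB)" by (rule D_span_image[OF Dm_lin])
  moreover have "Dm ` BB \<subseteq> (\<Union>m\<in>M. R m)"
  proof
    fix y assume "y \<in> Dm ` BB"
    then obtain S where S: "S \<subseteq> {..<n}" "y = Dm (ext_mon S)" by (auto simp: BB_def)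
    let ?m = "\<Sum>i\<in>S. \<nu> i"
    have "ext_mon S \<in> Bl ?m True \<union> Bl ?m False" using IXin[OF S(1)] by (cases "even (card S)") (auto simp: Bl_def)
    then have "ext_mon S \<in> ev.span (Bl ?m True \<union> Bl ?m False)" by (rule ev.span_base)
    then show "y \<in> (\<Union>m\<in>M. R m)" using S wtle[OF S(1)] by (auto simp: R_def)
  qed
  ultimately have Isub: "Dm ` ev.span BB \<subseteq> ev.span (\<Union>m\<in>M. R m)" using ev.span_mono[of "Dm ` BB" "\<Union>m\<in>M. R m"] by simp
  have UR: "(\<Union>m\<in>M. R m) \<subseteq> ev.span (Dm ` BB)" using Rsub by blast
  have "ev.dim (Dm ` ev.span BB) \<le> ev.dim (\<Union>m\<in>M. R m)"
    by (rule dim_mono_fin[OF Isub UR]) (simp add: fBB)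
  also have "\<dots> \<le> (\<Sum>m\<in>M. ev.dim (R m))"
    by (rule dim_UN_le[where F="Dm ` BB"]) (use Rsub fBB in \<open>auto simp: M_def\<close>)
  also have "\<dots> \<le> (\<Sum>m\<in>M. min (a m) (b m))"
  proof (rule sum_mono)
    fix m
    have "ev.dim (R m) \<le> a m" unfolding R_def a_def using block_bound[of m True] by simp
    moreover have "ev.dim (R m) \<le> b m" unfolding R_def b_def using block_bound[of m False] by (simp add: Un_commute)
    ultimately show "ev.dim (R m) \<le> min (a m) (b m)" by simp
  qed
  finally have dimI: "ev.dim (Dm ` ev.span BB) \<le> (\<Sum>m\<in>M. min (a m) (b m))" .
  have count: "(2::nat) ^ n = (\<Sum>m\<in>M. a m + b m)"
  proof -
    have "(2::nat) ^ n = card (Pow {..<n})" by (simp add: card_Pow)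
    also have "\<dots> = (\<Sum>S\<in>Pow {..<n}. 1)" by simp
    also have "\<dots> = (\<Sum>m\<in>M. \<Sum>S\<in>{S\<in>Pow {..<n}. (\<Sum>i\<in>S. \<nu> i) = m}. 1)"
      by (rule sum.group[symmetric]) (use wtle in \<open>auto simp: M_def\<close>)
    also have "\<dots> = (\<Sum>m\<in>M. a m + b m)"
    proof (rule sum.cong[OF refl])
      fix m
      have u: "{S\<in>Pow {..<n}. (\<Sum>i\<in>S. \<nu> i) = m} = IX m True \<union> IX m False" by (auto simp: IX_def)
      have "card (IX m True \<union> IX m False) = a m + b m"
        unfolding a_def b_def by (rule card_Un_disjoint) (auto simp: IX_fin IX_def)
      then have "card {S\<in>Pow {..<n}. (\<Sum>i\<in>S. \<nu> i) = m} = a m + b m" by (simp only: u)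
      then show "(\<Sum>S\<in>{S\<in>Pow {..<n}. (\<Sum>i\<in>S. \<nu> i) = m}. 1) = a m + b m" by simp
    qed
    finally show ?thesis .
  qed
  have hc: "n < (\<Sum>m\<in>M. \<bar>int (a m) - int (b m)\<bar>)"
    using hilali_count[of "{..<n}" \<nu>] nu_pos unfolding M_def W_def a_def b_def IX_def by simp
  have "(\<Sum>m\<in>M. \<bar>int (a m) - int (b m)\<bar>) = (\<Sum>m\<in>M. int (a m + b m) - 2 * int (min (a m) (b m)))"
    by (rule sum.cong) auto
  also have "\<dots> = int (\<Sum>m\<in>M. a m + b m) - 2 * int (\<Sum>m\<in>M. min (a m) (b m))"
    by (simp add: sum_subtractf sum_distrib_left)
  finally have e: "(\<Sum>m\<in>M. \<bar>int (a m) - int (b m)\<bar>) = int (\<Sum>m\<in>M. a m + b m) - 2 * int (\<Sum>m\<in>M. min (a m) (b m))" .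
  have countI: "int (\<Sum>m\<in>M. a m + b m) = 2 ^ n" using arg_cong[OF count, of int] by simp
  have "int n < 2 ^ n - 2 * int (\<Sum>m\<in>M. min (a m) (b m))" using hc unfolding e countI .
  then have "int n + 2 * int (ev.dim (Dm ` ev.span BB)) < 2 ^ n" using dimI by linarith
  moreover have "(2::int) ^ n \<le> int (ev.dim (Dm ` ev.span BB)) + int (ev.dim {x \<in> ev.span BB. Dm x = 0})"
  proof -
    have "int (2 ^ n) \<le> int (ev.dim (Dm ` ev.span BB) + ev.dim {x \<in> ev.span BB. Dm x = 0})"
      using rng by (simp only: of_nat_le_iff)
    then show ?thesis by simp
  qed
  ultimately have "n + ev.dim (Dm ` ev.span BB) \<le> ev.dim {x \<in> ev.span BB. Dm x = 0}" by linarith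
  then show ?thesis unfolding cohom_dim_def rat_vdim_def Ker Im by simp
qed

end

theorem mainTheorem2:
  fixes n :: nat and deg :: "nat \<Rightarrow> nat" and d :: "ext \<Rightarrow> ext"
    and c :: "nat \<Rightarrow> rat" and J :: "nat \<Rightarrow> nat set"
  assumes sull: "sullivan_algebra n deg d"
    and odd_deg: "\<forall>i<n. odd (deg i)"
    and monomial: "\<forall>i<n. J i \<subseteq> {..<n} \<and> d (ext_gen i) = ext_scale (c i) (ext_mon (J i))"
  shows "cohom_dim n d \<ge> n"
proof -
  interpret hyp n deg d c J using assms by unfold_locales
  obtain \<nu> :: "nat \<Rightarrow> nat" where nu: "\<And>i. i < n \<Longrightarrow> \<nu> i \<ge> 1"
    "\<And>i. i < n \<Longrightarrow> c i \<noteq> 0 \<Longrightarrow> \<nu> i = (\<Sum>j\<in>J i. \<nu> j)"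
    by (rule weights) blast
  interpret hypw n deg d c J \<nu> using nu by unfold_locales
  show ?thesis by (rule main_ineq)
qed


end
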